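(* Let $\sigma:\mathbb R\to\mathbb R$ be bounded with Hermite expansion $\sigma=\sum_{s\ge0}a_sh_s$, and for $r>0$ and $s\ge0$ let $a_s(r)=\sum_{j=0}^\infty a_{s+2j}\sqrt{\frac{(s+2j)!}{s!}}\frac{(r^2-1)^j}{j!2^j}$. If $r>0$ satisfies $|1-r^2|=:\epsilon<\frac12$, then for every $s\ge0$, $$|a_s(r)-a_s(1)|\le\|\sigma\|\,2^{(s+2)/2}\frac{\epsilon}{\sqrt{1-2\epsilon^2}}.$$
   Context: $h_0,h_1,\ldots$ are the Hermite polynomials orthonormal w.r.t. the standard Gaussian measure; $\|\sigma\|=\sqrt{\mathbb E_{X\sim\mathcal N(0,1)}\sigma(X)^2}$. Note $a_s(1)=a_s$. *)

theory Defs
  imports "HOL-Probability.Probability"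
begin

fun hermite_He :: "nat \<Rightarrow> real \<Rightarrow> real" where
  "hermite_He 0 x = 1"
| "hermite_He (Suc 0) x = x"
| "hermite_He (Suc (Suc n)) x = x * hermite_He (Suc n) x - real (Suc n) * hermite_He n x"

text \<open>Hermite polynomials orthonormal w.r.t. the standard Gaussian measure.\<close>
definition hermite_h :: "nat \<Rightarrow> real \<Rightarrow> real" where
  "hermite_h n x = hermite_He n x / sqrt (fact n)"

definition gauss :: "real measure" where
  "gauss = density lborel std_normal_density"

definition hermite_coeff :: "(real \<Rightarrow> real) \<Rightarrow> nat \<Rightarrow> real" where
  "hermite_coeff \<sigma> s = (\<integral>x. \<sigma> x * hermite_h s x \<partial>gauss)"

definition gnorm :: "(real \<Rightarrow> real) \<Rightarrow> real" where
  "gnorm \<sigma> = sqrt (\<integral>x. (\<sigma> x)\<^sup>2 \<partial>gauss)"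

definition hermite_coeff_r :: "(real \<Rightarrow> real) \<Rightarrow> real \<Rightarrow> nat \<Rightarrow> real" where
  "hermite_coeff_r \<sigma> r s = (\<Sum>j. hermite_coeff \<sigma> (s + 2 * j)
       * sqrt (fact (s + 2 * j) / fact s) * (r\<^sup>2 - 1) ^ j / (fact j * 2 ^ j))"

end

theory Submission
  imports Defs "HOL-Computational_Algebra.Polynomial"
begin


fun He_poly :: "nat \<Rightarrow> real poly" where
  "He_poly 0 = 1"
| "He_poly (Suc 0) = [:0, 1:]"
| "He_poly (Suc (Suc n)) = [:0, 1:] * He_poly (Suc n) - smult (real (Suc n)) (He_poly n)"

lemma poly_He: "poly (He_poly n) x = hermite_He n x"
  by (induction n rule: He_poly.induct) auto

lemma pderiv_He_aux:
  "pderiv (He_poly (Suc n)) = smult (real (Suc n)) (He_poly n) \<and>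
   pderiv (He_poly (Suc (Suc n))) = smult (real (Suc (Suc n))) (He_poly (Suc n))"
proof (induction n)
  case 0
  then show ?case by (simp add: pderiv_pCons pderiv_mult)
next
  case (Suc n)
  have IH: "pderiv (He_poly (Suc (Suc n))) = smult (real (Suc (Suc n))) (He_poly (Suc n))"
    using Suc.IH by blast
  have IH2: "pderiv (He_poly (Suc n)) = smult (real (Suc n)) (He_poly n)"
    using Suc.IH by blast
  have A: "He_poly (Suc (Suc n)) = [:0,1:] * He_poly (Suc n) - smult (real (Suc n)) (He_poly n)"
    by simp
  have "pderiv (He_poly (Suc (Suc (Suc n)))) =
     He_poly (Suc (Suc n)) + [:0,1:] * smult (real (Suc (Suc n))) (He_poly (Suc n))
     - smult (real (Suc (Suc n))) (smult (real (Suc n)) (He_poly n))"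
    using IH IH2 by (simp only: He_poly.simps pderiv_mult pderiv_diff pderiv_smult) (simp add: pderiv_pCons)
  also have "\<dots> = smult (real (Suc (Suc (Suc n)))) (He_poly (Suc (Suc n)))"
    by (rule poly_ext, unfold A, simp add: algebra_simps del: He_poly.simps)
  finally show ?case using IH by blast
qed

lemma pderiv_He: "pderiv (He_poly (Suc n)) = smult (real (Suc n)) (He_poly n)"
  using pderiv_He_aux by blast

lemma gauss_prob: "prob_space gauss"
  unfolding gauss_def by (rule prob_space_normal_density) simp

lemma integrable_gauss_iff:
  assumes [measurable]: "f \<in> borel_measurable borel"
  shows "integrable gauss f \<longleftrightarrow> integrable lborel (\<lambda>x. std_normal_density x * f x)"
  unfolding gauss_def
  by (subst integrable_density) (auto simp: normal_density_nonneg)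

lemma integral_gauss:
  assumes [measurable]: "f \<in> borel_measurable borel"
  shows "integral\<^sup>L gauss f = (\<integral>x. std_normal_density x * f x \<partial>lborel)"
  unfolding gauss_def
  by (subst integral_density) (auto simp: normal_density_nonneg)

definition mom :: "nat \<Rightarrow> real" where "mom k = (\<integral>x. x ^ k \<partial>gauss)"

lemma integrable_pow: "integrable gauss (\<lambda>x. x ^ k)"
  by (subst integrable_gauss_iff) (auto intro: integrable_std_normal_moment)

lemma mom_rec: "mom (Suc (Suc k)) = real (Suc k) * mom k"
proof (cases "even k")
  case True
  then obtain j where k: "k = 2 * j" by auto
  have a: "mom (2 * j) = fact (2 * j) / (2^j * fact j)"
    unfolding mom_def k by (subst integral_gauss) (auto simp: integral_std_normal_moment_even)
  have b: "mom (Suc (Suc k)) = fact (2 * Suc j) / (2^Suc j * fact (Suc j))"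
    unfolding mom_def k using integral_std_normal_moment_even[of "Suc j"]
    by (subst integral_gauss) auto
  have e: "2 * Suc j = Suc (Suc (2 * j))" by simp
  have f1: "(fact (2 * Suc j) :: real) = (2 * (real j + 1)) * ((2 * real j + 1) * fact (2 * j))"
    unfolding e by (simp only: fact_Suc) (simp add: algebra_simps)
  have f2: "(fact (Suc j) :: real) = (real j + 1) * fact j" by (simp add: fact_Suc)
  have aux: "\<And>a b F P G :: real. a > 0 \<Longrightarrow> P > 0 \<Longrightarrow> G > 0 \<Longrightarrow>
      (2 * a) * (b * F) / (2 * P * (a * G)) = b * (F / (P * G))"
    by (simp add: field_simps)
  have "mom (Suc (Suc k)) = (2 * (real j + 1)) * ((2 * real j + 1) * fact (2 * j)) / (2 * 2 ^ j * ((real j + 1) * fact j))"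
    unfolding b f1 f2 by simp
  also have "\<dots> = (2 * real j + 1) * (fact (2 * j) / (2 ^ j * fact j))"
    by (rule aux) auto
  finally show ?thesis unfolding k a by simp
next
  case False
  then obtain j where k: "k = 2 * j + 1" using oddE by blast
  have meas: "(\<lambda>x::real. x ^ (2 * j + 1)) \<in> borel_measurable borel" by measurable
  have a: "mom k = 0"
    unfolding mom_def k by (simp only: integral_gauss[OF meas] integral_std_normal_moment_odd)
  have b: "mom (Suc (Suc k)) = 0"
    unfolding mom_def k using integral_std_normal_moment_odd[of "Suc j"]
    by (subst integral_gauss) auto
  show ?thesis using a b by simp
qed

lemma mom_1: "mom (Suc 0) = 0"
  unfolding mom_def using integral_std_normal_moment_odd[of 0]
  by (subst integral_gauss) auto

definition L :: "real poly \<Rightarrow> real" where "L p = (\<integral>x. poly p x \<partial>gauss)"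

lemma poly_sum_lt:
  fixes p :: "real poly"
  assumes "degree p < N"
  shows "poly p x = (\<Sum>i<N. coeff p i * x ^ i)"
proof -
  have "poly p x = (\<Sum>i\<le>degree p. coeff p i * x ^ i)" by (simp add: poly_altdef)
  also have "\<dots> = (\<Sum>i<N. coeff p i * x ^ i)"
    using assms by (intro sum.mono_neutral_left) (auto simp: coeff_eq_0)
  finally show ?thesis .
qed

lemma integrable_poly: "integrable gauss (\<lambda>x. poly p x)"
  unfolding poly_altdef by (intro Bochner_Integration.integrable_sum integrable_mult_right integrable_pow)

lemma L_sum:
  assumes "degree p < N"
  shows "L p = (\<Sum>i<N. coeff p i * mom i)"
  unfolding L_def mom_def poly_sum_lt[OF assms]
  by (subst Bochner_Integration.integral_sum) (auto intro: integrable_pow)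

lemma L_add: "L (p + q) = L p + L q"
proof -
  have "poly (p + q) = (\<lambda>x. poly p x + poly q x)" by (rule ext) simp
  then show ?thesis unfolding L_def by (simp add: integrable_poly)
qed
lemma L_diff: "L (p - q) = L p - L q"
proof -
  have "poly (p - q) = (\<lambda>x. poly p x - poly q x)" by (rule ext) simp
  then show ?thesis unfolding L_def by (simp add: integrable_poly)
qed
lemma L_smult: "L (smult c p) = c * L p"
proof -
  have "poly (smult c p) = (\<lambda>x. c * poly p x)" by (rule ext) simp
  then show ?thesis unfolding L_def by simp
qed
lemma L_const: "L [:c:] = c"
proof -
  have "poly [:c:] = (\<lambda>x. c)" by (rule ext) simp
  then show ?thesis unfolding L_def using gauss_prob by (simp add: prob_space.prob_space)
qed
lemma L_one: "L 1 = 1"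
  using L_const[of 1] by (simp add: one_pCons)

lemma stein: "L (pCons 0 p) = L (pderiv p)"
proof -
  define N where "N = Suc (degree p)"
  have d1: "degree (pCons 0 p) < Suc N" unfolding N_def
    by (metis degree_pCons_le le_imp_less_Suc)
  have d2: "degree (pderiv p) < N" unfolding N_def
    by (metis degree_pderiv diff_le_self le_imp_less_Suc)
  have "L (pCons 0 p) = (\<Sum>i<Suc N. coeff (pCons 0 p) i * mom i)" by (rule L_sum[OF d1])
  also have "\<dots> = (\<Sum>i<N. coeff p i * mom (Suc i))"
    by (subst sum.lessThan_Suc_shift) simp
  also have "\<dots> = (\<Sum>i<Suc (degree p). coeff p i * mom (Suc i))" unfolding N_def ..
  also have "\<dots> = coeff p 0 * mom 1 + (\<Sum>i<degree p. coeff p (Suc i) * mom (Suc (Suc i)))"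
    by (subst sum.lessThan_Suc_shift) simp
  also have "\<dots> = (\<Sum>i<degree p. coeff p (Suc i) * mom (Suc (Suc i)))"
    by (simp add: mom_1)
  also have "\<dots> = (\<Sum>i<N. coeff (pderiv p) i * mom i)"
  proof -
    have "(\<Sum>i<N. coeff (pderiv p) i * mom i) = (\<Sum>i<degree p. coeff (pderiv p) i * mom i)"
      unfolding N_def by (simp add: coeff_pderiv coeff_eq_0)
    then show ?thesis by (simp add: coeff_pderiv mom_rec mult_ac)
  qed
  also have "\<dots> = L (pderiv p)" by (rule L_sum[OF d2, symmetric])
  finally show ?thesis .
qed


lemma key_step: "L (He_poly (Suc n) * g) = L (He_poly n * pderiv g)"
proof (cases n)
  case 0
  then show ?thesis using stein[of g] by simp
next
  case (Suc m)
  have "He_poly (Suc n) * g = pCons 0 (He_poly (Suc m) * g) - smult (real (Suc m)) (He_poly m * g)"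
    unfolding Suc by (simp add: algebra_simps)
  then have "L (He_poly (Suc n) * g) = L (pderiv (He_poly (Suc m) * g)) - real (Suc m) * L (He_poly m * g)"
    by (simp add: L_diff L_smult stein)
  also have "\<dots> = L (He_poly (Suc m) * pderiv g)"
    by (simp add: pderiv_mult pderiv_He L_add L_smult algebra_simps)
  finally show ?thesis unfolding Suc .
qed

lemma L_He_deriv: "L (He_poly n * g) = L ((pderiv ^^ n) g)"
proof (induction n arbitrary: g)
  case 0
  then show ?case by simp
next
  case (Suc n)
  then show ?case by (simp add: key_step funpow_Suc_right del: funpow.simps)
qed

lemma funpow_pderiv_He:
  "k \<le> m \<Longrightarrow> (pderiv ^^ k) (He_poly m) = smult (fact m / fact (m - k)) (He_poly (m - k))"
proof (induction k)
  case 0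
  then show ?case by simp
next
  case (Suc k)
  then have km: "k < m" by simp
  then obtain l where l: "m - k = Suc l" by (metis Suc_diff_Suc)
  have ml: "m - Suc k = l" using l by simp
  have "(pderiv ^^ Suc k) (He_poly m) = smult (fact m / fact (Suc l)) (smult (real (Suc l)) (He_poly l))"
    using Suc km by (simp add: l pderiv_smult pderiv_He)
  also have "\<dots> = smult (fact m / fact l) (He_poly l)"
  proof -
    have f: "fact (Suc l) = real (Suc l) * (fact l :: real)" by (rule fact_Suc)
    have nz: "real (Suc l) \<noteq> 0" by simp
    have "fact m / fact (Suc l) * real (Suc l) = (fact m / fact l :: real)"
      unfolding f using nz by (simp only: divide_divide_eq_left' [symmetric]) simp
    then show ?thesis by (simp only: smult_smult)
  qed
  finally show ?case unfolding ml .
qed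

lemma funpow_pderiv_const: "(pderiv ^^ k) [:c:] = (if k = 0 then [:c:] else 0)"
  by (induction k) (auto simp: pderiv_pCons)

lemma L_He_He_le:
  assumes "m \<le> n"
  shows "L (He_poly n * He_poly m) = (if n = m then fact n else 0)"
proof -
  have "(pderiv ^^ n) (He_poly m) = (pderiv ^^ (n - m)) ((pderiv ^^ m) (He_poly m))"
    using assms by (metis funpow_add le_add_diff_inverse2 o_apply)
  also have "\<dots> = (pderiv ^^ (n - m)) [:fact m:]"
    by (simp add: funpow_pderiv_He)
  finally have "(pderiv ^^ n) (He_poly m) = (if n = m then [:fact m:] else 0)"
    using assms by (simp add: funpow_pderiv_const)
  then show ?thesis by (simp add: L_He_deriv L_const) (simp add: L_def)
qed

lemma L_He_He: "L (He_poly n * He_poly m) = (if n = m then fact n else 0)"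
proof (cases "m \<le> n")
  case True
  then show ?thesis by (rule L_He_He_le)
next
  case False
  then have "L (He_poly m * He_poly n) = 0" using L_He_He_le[of n m] by simp
  then show ?thesis using False by (simp add: mult.commute)
qed



lemma sets_gauss: "sets gauss = sets borel"
  by (simp add: gauss_def)

lemma meas_gauss: "f \<in> borel_measurable borel \<Longrightarrow> f \<in> borel_measurable gauss"
  using measurable_cong_sets[OF sets_gauss refl] by blast

lemma h_poly: "hermite_h k x = poly (He_poly k) x / sqrt (fact k)"
  by (simp add: hermite_h_def poly_He)

lemma integrable_h: "integrable gauss (\<lambda>x. hermite_h k x)"
  unfolding h_poly by (intro integrable_divide integrable_poly)

lemma integrable_hh: "integrable gauss (\<lambda>x. hermite_h k x * hermite_h l x)"
proof -
  have "(\<lambda>x. hermite_h k x * hermite_h l x) =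
        (\<lambda>x. poly (He_poly k * He_poly l) x / (sqrt (fact k) * sqrt (fact l)))"
    by (rule ext) (simp add: h_poly)
  then show ?thesis by (simp only:) (intro integrable_divide integrable_poly)
qed

lemma int_hh: "(\<integral>x. hermite_h k x * hermite_h l x \<partial>gauss) = (if k = l then 1 else 0)"
proof -
  have "(\<lambda>x. hermite_h k x * hermite_h l x) =
        (\<lambda>x. poly (He_poly k * He_poly l) x / (sqrt (fact k) * sqrt (fact l)))"
    by (rule ext) (simp add: h_poly)
  then have "(\<integral>x. hermite_h k x * hermite_h l x \<partial>gauss)
      = L (He_poly k * He_poly l) / (sqrt (fact k) * sqrt (fact l))"
    by (simp add: L_def)
  also have "\<dots> = (if k = l then 1 else 0)"
    by (simp add: L_He_He)
  finally show ?thesis .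
qed

locale bsig =
  fixes \<sigma> :: "real \<Rightarrow> real"
  assumes meas: "\<sigma> \<in> borel_measurable borel"
    and bnd: "bounded (range \<sigma>)"
begin

lemma measg[measurable]: "\<sigma> \<in> borel_measurable gauss"
  using meas by (rule meas_gauss)

lemma bound: obtains B where "B \<ge> 0" "\<And>x. \<bar>\<sigma> x\<bar> \<le> B"
proof -
  obtain a where "\<forall>y\<in>range \<sigma>. norm y \<le> a" using bnd bounded_iff by metis
  then have "\<And>x. \<bar>\<sigma> x\<bar> \<le> a" by auto
  moreover have "a \<ge> 0" using \<open>\<And>x. \<bar>\<sigma> x\<bar> \<le> a\<close>[of 0] by linarith
  ultimately show ?thesis using that by blast
qed

lemma integrable_sig_h: "integrable gauss (\<lambda>x. \<sigma> x * hermite_h k x)"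
proof -
  obtain B where B: "B \<ge> 0" "\<And>x. \<bar>\<sigma> x\<bar> \<le> B" using bound by blast
  have hm[measurable]: "(\<lambda>x. hermite_h k x) \<in> borel_measurable gauss"
    using integrable_h by (rule borel_measurable_integrable)
  show ?thesis
  proof (rule Bochner_Integration.integrable_bound)
    show "integrable gauss (\<lambda>x. B * hermite_h k x)" by (intro integrable_mult_right integrable_h)
    show "(\<lambda>x. \<sigma> x * hermite_h k x) \<in> borel_measurable gauss" by measurable
    show "AE x in gauss. norm (\<sigma> x * hermite_h k x) \<le> norm (B * hermite_h k x)"
      using B by (auto simp: abs_mult intro!: mult_right_mono)
  qed
qed

lemma integrable_sig2: "integrable gauss (\<lambda>x. (\<sigma> x)\<^sup>2)"
proof -
  obtain B where B: "B \<ge> 0" "\<And>x. \<bar>\<sigma> x\<bar> \<le> B" using bound by blast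
  have fm: "finite_measure gauss" using gauss_prob by (simp add: prob_space_def)
  show ?thesis
  proof (rule finite_measure.integrable_const_bound[OF fm])
    show "AE x in gauss. norm ((\<sigma> x)\<^sup>2) \<le> B\<^sup>2"
    proof (intro AE_I2)
      fix x
      have "\<bar>\<sigma> x\<bar>\<^sup>2 \<le> B\<^sup>2" by (rule power_mono) (use B in auto)
      then show "norm ((\<sigma> x)\<^sup>2) \<le> B\<^sup>2" by simp
    qed
    show "(\<lambda>x. (\<sigma> x)\<^sup>2) \<in> borel_measurable gauss" by measurable
  qed
qed

lemma bessel:
  assumes "finite K"
  shows "(\<Sum>k\<in>K. (hermite_coeff \<sigma> k)\<^sup>2) \<le> (\<integral>x. (\<sigma> x)\<^sup>2 \<partial>gauss)"
proof -
  define a where "a k = hermite_coeff \<sigma> k" for k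
  define S where "S x = (\<Sum>k\<in>K. a k * hermite_h k x)" for x
  have intS: "integrable gauss (\<lambda>x. \<sigma> x * S x)"
    unfolding S_def sum_distrib_left
    by (intro Bochner_Integration.integrable_sum)
       (simp add: mult.left_commute[of "\<sigma> _"] integrable_sig_h)
  have I1: "(\<integral>x. \<sigma> x * S x \<partial>gauss) = (\<Sum>k\<in>K. (a k)\<^sup>2)"
  proof -
    have "(\<integral>x. \<sigma> x * S x \<partial>gauss) = (\<integral>x. (\<Sum>k\<in>K. a k * (\<sigma> x * hermite_h k x)) \<partial>gauss)"
      unfolding S_def sum_distrib_left by (simp add: mult.left_commute)
    also have "\<dots> = (\<Sum>k\<in>K. a k * (\<integral>x. \<sigma> x * hermite_h k x \<partial>gauss))"
      by (subst Bochner_Integration.integral_sum) (auto simp: integrable_sig_h)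
    also have "\<dots> = (\<Sum>k\<in>K. (a k)\<^sup>2)"
      by (simp add: a_def hermite_coeff_def power2_eq_square)
    finally show ?thesis .
  qed
  have SS: "S x * S x = (\<Sum>k\<in>K. \<Sum>l\<in>K. a k * a l * (hermite_h k x * hermite_h l x))" for x
    unfolding S_def sum_product by (simp add: mult_ac)
  have intSS: "integrable gauss (\<lambda>x. S x * S x)"
    unfolding SS
    by (intro Bochner_Integration.integrable_sum integrable_mult_right integrable_hh)
  have I2: "(\<integral>x. S x * S x \<partial>gauss) = (\<Sum>k\<in>K. (a k)\<^sup>2)"
  proof -
    have "(\<integral>x. S x * S x \<partial>gauss) =
       (\<Sum>k\<in>K. \<Sum>l\<in>K. a k * a l * (\<integral>x. hermite_h k x * hermite_h l x \<partial>gauss))"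
      unfolding SS
      by (simp add: Bochner_Integration.integral_sum integrable_hh
               Bochner_Integration.integrable_sum)
    also have "\<dots> = (\<Sum>k\<in>K. (a k)\<^sup>2)"
      using assms by (simp add: int_hh power2_eq_square if_distrib cong: if_cong)
    finally show ?thesis .
  qed
  have eq: "(\<lambda>x. (\<sigma> x - S x)\<^sup>2) = (\<lambda>x. (\<sigma> x)\<^sup>2 - 2 * (\<sigma> x * S x) + S x * S x)"
    by (rule ext) (simp add: power2_eq_square algebra_simps)
  have "0 \<le> (\<integral>x. (\<sigma> x - S x)\<^sup>2 \<partial>gauss)"
    by (rule integral_nonneg_AE) simp
  also have "\<dots> = (\<integral>x. (\<sigma> x)\<^sup>2 \<partial>gauss) - 2 * (\<integral>x. \<sigma> x * S x \<partial>gauss) + (\<integral>x. S x * S x \<partial>gauss)"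
    unfolding eq using integrable_sig2 intS intSS
    by (simp add: integrable_mult_right)
  finally show ?thesis unfolding I1 I2 a_def by simp
qed

end



definition Rc :: "nat \<Rightarrow> real" where "Rc m = fact (2 * m) / (fact m ^ 2 * 4 ^ m)"

lemma Rc_le: "m \<ge> 1 \<Longrightarrow> Rc m \<le> 1 / 2"
proof (induction m rule: dec_induct)
  case base
  then show ?case by (simp add: Rc_def numeral_2_eq_2)
next
  case (step m)
  have e: "2 * Suc m = Suc (Suc (2 * m))" by simp
  have f1: "(fact (2 * Suc m) :: real) = (2 * (real m + 1)) * ((2 * real m + 1) * fact (2 * m))"
    unfolding e by (simp only: fact_Suc) (simp add: algebra_simps)
  have f2: "(fact (Suc m) :: real) = (real m + 1) * fact m" by (simp add: fact_Suc)
  have aux: "\<And>a b F G P :: real. a > 0 \<Longrightarrow> G > 0 \<Longrightarrow> P > 0 \<Longrightarrow>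
     (2 * a) * (b * F) / ((a * G)\<^sup>2 * (4 * P)) = F / (G\<^sup>2 * P) * (b / (2 * a))"
    by (simp add: field_simps power2_eq_square)
  have "Rc (Suc m) = Rc m * ((2 * real m + 1) / (2 * (real m + 1)))"
    unfolding Rc_def f1 f2 power_Suc[of "4::real"] by (rule aux) auto
  also have "\<dots> \<le> Rc m * 1"
    by (intro mult_left_mono) (auto simp: Rc_def)
  finally show ?case using step by simp
qed

definition Sb :: "nat \<Rightarrow> nat \<Rightarrow> real" where
  "Sb s N = (\<Sum>k\<le>N. real ((s + k) choose k) / 2 ^ k)"

lemma Sb_rec: "Sb (Suc s) (Suc N) = Sb s (Suc N) + Sb (Suc s) N / 2"
proof (induction N)
  case 0
  then show ?case by (simp add: Sb_def field_simps)
next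
  case (Suc N)
  define t1 where "t1 = real ((Suc s + Suc (Suc N)) choose Suc (Suc N)) / 2 ^ Suc (Suc N)"
  define t2 where "t2 = real ((s + Suc (Suc N)) choose Suc (Suc N)) / 2 ^ Suc (Suc N)"
  define t3 where "t3 = real ((Suc s + Suc N) choose Suc N) / 2 ^ Suc N"
  have s1: "Sb (Suc s) (Suc (Suc N)) = Sb (Suc s) (Suc N) + t1"
    unfolding Sb_def t1_def by (simp only: sum.atMost_Suc)
  have s2: "Sb s (Suc (Suc N)) = Sb s (Suc N) + t2"
    unfolding Sb_def t2_def by (simp only: sum.atMost_Suc)
  have s3: "Sb (Suc s) (Suc N) = Sb (Suc s) N + t3"
    unfolding Sb_def t3_def by (simp only: sum.atMost_Suc)
  have pas: "real ((Suc s + Suc (Suc N)) choose Suc (Suc N)) =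
      real ((s + Suc (Suc N)) choose Suc (Suc N)) + real ((Suc s + Suc N) choose Suc N)"
  proof -
    have "Suc s + Suc (Suc N) = Suc (s + Suc (Suc N))" by simp
    moreover have "Suc s + Suc N = s + Suc (Suc N)" by simp
    ultimately show ?thesis by (simp only: binomial_Suc_Suc of_nat_add)
  qed
  have gen: "\<And>X Y::real. (X + Y) / 2 ^ Suc (Suc N) = X / 2 ^ Suc (Suc N) + (Y / 2 ^ Suc N) / 2"
    by (simp add: field_simps)
  have "t1 = t2 + t3 / 2" unfolding t1_def t2_def t3_def pas by (rule gen)
  then show ?case using s1 s2 s3 Suc.IH by linarith
qed

lemma Sb_mono: "Sb s N \<le> Sb s (Suc N)"
  unfolding Sb_def by simp

lemma Sb_le: "Sb s N \<le> 2 ^ (s + 1)"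
proof (induction s arbitrary: N)
  case 0
  have "(\<Sum>k\<le>N. (1/2::real) ^ k) = 2 - (1/2) ^ N"
    by (induction N) (auto simp: field_simps)
  then show ?case unfolding Sb_def by (simp add: power_divide)
next
  case (Suc s)
  show ?case
  proof (cases N)
    case 0
    have "Sb (Suc s) N = 1" using 0 by (simp add: Sb_def)
    moreover have "(1::real) \<le> 2 ^ (Suc s + 1)" by (rule one_le_power) simp
    ultimately show ?thesis by simp
  next
    case (Suc M)
    have "Sb (Suc s) (Suc M) = Sb s (Suc M) + Sb (Suc s) M / 2" by (rule Sb_rec)
    also have "\<dots> \<le> Sb s (Suc M) + Sb (Suc s) (Suc M) / 2"
      using Sb_mono[of "Suc s" M] by simp
    finally have "Sb (Suc s) (Suc M) \<le> 2 * Sb s (Suc M)" by simp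
    also have "\<dots> \<le> 2 * 2 ^ (s + 1)" using Suc.IH[of "Suc M"] by simp
    finally show ?thesis using Suc by simp
  qed
qed

definition bb :: "nat \<Rightarrow> nat \<Rightarrow> real" where
  "bb s m = real ((s + 2 * m) choose (2 * m)) / 4 ^ m"

lemma bb_partial: "(\<Sum>j<N. bb s (Suc j)) \<le> 2 ^ (s + 1)"
proof -
  have inj: "inj_on (\<lambda>j. 2 * Suc j) {..<N}" by (auto simp: inj_on_def)
  have p4: "(2::real) ^ (2 * n) = 4 ^ n" for n by (simp add: power_mult)
  have "(\<Sum>k\<in>(\<lambda>j. 2 * Suc j) ` {..<N}. real ((s + k) choose k) / 2 ^ k)
      = (\<Sum>j<N. real ((s + 2 * Suc j) choose (2 * Suc j)) / 2 ^ (2 * Suc j))"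
    by (simp only: sum.reindex[OF inj] o_def)
  also have "\<dots> = (\<Sum>j<N. bb s (Suc j))"
    unfolding bb_def p4 ..
  finally have "(\<Sum>j<N. bb s (Suc j)) = (\<Sum>k\<in>(\<lambda>j. 2 * Suc j) ` {..<N}. real ((s + k) choose k) / 2 ^ k)"
    by simp
  also have "\<dots> \<le> (\<Sum>k\<le>2 * N. real ((s + k) choose k) / 2 ^ k)"
    by (intro sum_mono2) auto
  also have "\<dots> \<le> 2 ^ (s + 1)" using Sb_le unfolding Sb_def by blast
  finally show ?thesis .
qed

lemma bb_nonneg: "bb s m \<ge> 0" unfolding bb_def by simp

lemma summable_bb: "summable (\<lambda>j. bb s (Suc j))"
  by (rule summableI_nonneg_bounded[where x = "2 ^ (s + 1)"], rule bb_nonneg, rule bb_partial)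

lemma suminf_bb: "(\<Sum>j. bb s (Suc j)) \<le> 2 ^ (s + 1)"
  using summable_bb by (rule suminf_le_const) (rule bb_partial)

lemma c_bound:
  fixes x :: real
  assumes x: "0 \<le> x" "x \<le> 1/4" and m: "m \<ge> 1"
  shows "fact (s + 2 * m) / fact s * x ^ m / (fact m ^ 2 * 4 ^ m) \<le> 2 * x * bb s m"
proof -
  obtain n where mn: "m = Suc n" using m by (cases m) auto
  have bbf: "bb s m = fact (s + 2 * m) / (fact s * fact (2 * m)) / 4 ^ m"
    unfolding bb_def by (subst binomial_fact) (auto simp: mult.commute)
  have "fact (s + 2 * m) / fact s * x ^ m / (fact m ^ 2 * 4 ^ m)
      = bb s m * (Rc m * 4 ^ m * x ^ m)"
    unfolding bbf Rc_def by (simp add: field_simps)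
  also have "\<dots> \<le> bb s m * (1/2 * 4 ^ m * (x * (1/4) ^ n))"
  proof (rule mult_left_mono[OF mult_mono])
    show "Rc m * 4 ^ m \<le> 1 / 2 * 4 ^ m" using Rc_le[OF m] by simp
    have "x ^ m = x * x ^ n" unfolding mn by simp
    also have "\<dots> \<le> x * (1/4) ^ n"
      using x by (intro mult_left_mono power_mono) auto
    finally show "x ^ m \<le> x * (1/4) ^ n" .
  qed (use x in \<open>auto simp: bb_nonneg\<close>)
  also have "\<dots> = 2 * x * bb s m"
  proof -
    have "(4::real) ^ m * (1/4) ^ n = 4 * (4 * (1/4)) ^ n"
      unfolding mn power_Suc power_mult_distrib by simp
    then have "(4::real) ^ m * (1/4) ^ n = 4" by simp
    then show ?thesis by (simp add: field_simps)
  qed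
  finally show ?thesis .
qed



lemma amgm: fixes t u v :: real assumes "t > 0" shows "u * v \<le> (t * u\<^sup>2 + v\<^sup>2 / t) / 2"
proof -
  have "(t * u\<^sup>2 + v\<^sup>2 / t) / 2 - u * v = (t * u - v)\<^sup>2 / (2 * t)"
    using assms by (simp add: field_simps power2_eq_square)
  also have "\<dots> \<ge> 0" using assms by simp
  finally show ?thesis by simp
qed

lemma sqrt_pow_eq: "sqrt (2 ^ (s + 2) * e\<^sup>2) = 2 powr ((real s + 2) / 2) * \<bar>e\<bar>"
proof -
  have "sqrt (2 ^ (s + 2) * e\<^sup>2) = sqrt (2 ^ (s + 2)) * \<bar>e\<bar>" by (simp add: real_sqrt_mult)
  moreover have "sqrt (2 ^ (s + 2) :: real) = 2 powr ((real s + 2) / 2)"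
  proof -
    have "(2::real) powr (real s + 2) = 2 powr (real (s + 2))" by (simp only: of_nat_add of_nat_numeral)
    also have "\<dots> = 2 ^ (s + 2)" by (rule powr_realpow) simp
    finally have X: "(2::real) powr (real s + 2) = 2 ^ (s + 2)" .
    then have "(2::real) ^ (s + 2) = 2 powr (real s + 2)" by (rule sym)
    then have "sqrt (2 ^ (s + 2) :: real) = (2 powr (real s + 2)) powr (1/2)"
      by (simp add: powr_half_sqrt)
    also have "\<dots> = 2 powr ((real s + 2) / 2)" by (simp add: powr_powr)
    finally show ?thesis .
  qed
  ultimately show ?thesis by simp
qed

theorem lemma23:
  fixes \<sigma> :: "real \<Rightarrow> real" and r \<epsilon> :: real and s :: nat
  assumes "\<sigma> \<in> borel_measurable borel"
    and "bounded (range \<sigma>)"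
    and "r > 0"
    and "\<epsilon> = \<bar>1 - r\<^sup>2\<bar>"
    and "\<epsilon> < 1 / 2"
  shows "\<bar>hermite_coeff_r \<sigma> r s - hermite_coeff_r \<sigma> 1 s\<bar>
           \<le> gnorm \<sigma> * 2 powr ((real s + 2) / 2) * (\<epsilon> / sqrt (1 - 2 * \<epsilon>\<^sup>2))"
proof -
  interpret bsig \<sigma> using assms(1,2) by unfold_locales
  define a where "a k = hermite_coeff \<sigma> k" for k
  define G2 where "G2 = (\<integral>x. (\<sigma> x)\<^sup>2 \<partial>gauss)"
  have G2nn: "G2 \<ge> 0" unfolding G2_def by (rule integral_nonneg_AE) simp
  have gn: "gnorm \<sigma> = sqrt G2" by (simp add: gnorm_def G2_def)
  have eps0: "\<epsilon> \<ge> 0" using assms(4) by simp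
  define x where "x = \<epsilon>\<^sup>2"
  have x0: "0 \<le> x" unfolding x_def by simp
  have x1: "x \<le> 1/4"
  proof -
    have "\<epsilon>\<^sup>2 \<le> (1/2)\<^sup>2" using eps0 assms(5) by (intro power_mono) auto
    then show ?thesis unfolding x_def by (simp add: power2_eq_square)
  qed
  have sq_pos: "0 < sqrt (1 - 2 * \<epsilon>\<^sup>2)" using x1 unfolding x_def by simp
  have sq_le: "sqrt (1 - 2 * \<epsilon>\<^sup>2) \<le> 1" using x0 unfolding x_def by simp
  have rhs_nn: "0 \<le> gnorm \<sigma> * 2 powr ((real s + 2) / 2) * (\<epsilon> / sqrt (1 - 2 * \<epsilon>\<^sup>2))"
    using eps0 sq_pos gn G2nn by simp
  define f where "f j = a (s + 2 * j) * sqrt (fact (s + 2 * j) / fact s) * (r\<^sup>2 - 1) ^ j / (fact j * 2 ^ j)" for j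
  have hr: "hermite_coeff_r \<sigma> r s = suminf f"
    unfolding hermite_coeff_r_def f_def a_def ..
  have h1: "hermite_coeff_r \<sigma> 1 s = a s"
  proof -
    have "(\<lambda>j. hermite_coeff \<sigma> (s + 2 * j) * sqrt (fact (s + 2 * j) / fact s) * (1\<^sup>2 - 1) ^ j / (fact j * 2 ^ j))
        = (\<lambda>j. if j = 0 then a s else 0)"
      by (rule ext) (auto simp: a_def)
    moreover have "(\<lambda>j. if j = 0 then a s else 0) sums a s"
      using sums_single[of 0 "\<lambda>_. a s"] by simp
    ultimately show ?thesis unfolding hermite_coeff_r_def by (simp add: sums_iff)
  qed
  show ?thesis
  proof (cases "\<epsilon> = 0")
    case True
    then have "r\<^sup>2 = 1\<^sup>2" using assms(4) by simp
    then have "hermite_coeff_r \<sigma> r s = hermite_coeff_r \<sigma> 1 s"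
      unfolding hermite_coeff_r_def by simp
    then show ?thesis using rhs_nn by simp
  next
    case epsnz: False
    show ?thesis
    proof (cases "G2 = 0")
      case True
      have az: "a k = 0" for k
      proof -
        have "(\<Sum>k\<in>{k}. (hermite_coeff \<sigma> k)\<^sup>2) \<le> G2" unfolding G2_def by (rule bessel) simp
        then show ?thesis using True by (simp add: a_def)
      qed
      have "hermite_coeff_r \<sigma> r s = 0" unfolding hr f_def az by simp
      moreover have "hermite_coeff_r \<sigma> 1 s = 0" unfolding h1 az ..
      ultimately show ?thesis using rhs_nn by simp
    next
      case G2nz: False
      have G2p: "G2 > 0" using G2nn G2nz by simp
      have epsp: "\<epsilon> > 0" using eps0 epsnz by simp
      have xp: "x > 0" unfolding x_def using epsp by simp
      define A where "A j = (a (s + 2 * Suc j))\<^sup>2" for j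
      have Apart: "(\<Sum>j<N. A j) \<le> G2" for N
      proof -
        have inj: "inj_on (\<lambda>j. s + 2 * Suc j) {..<N}" by (auto simp: inj_on_def)
        have "(\<Sum>j<N. A j) = (\<Sum>k\<in>(\<lambda>j. s + 2 * Suc j) ` {..<N}. (hermite_coeff \<sigma> k)\<^sup>2)"
          by (simp only: sum.reindex[OF inj] o_def A_def a_def)
        also have "\<dots> \<le> G2" unfolding G2_def by (rule bessel) simp
        finally show ?thesis .
      qed
      have Asum: "summable A"
        by (rule summableI_nonneg_bounded[where x = G2], simp add: A_def, rule Apart)
      have Ale: "suminf A \<le> G2" using Asum by (rule suminf_le_const) (rule Apart)
      define c where "c j = sqrt (fact (s + 2 * j) / fact s) * \<epsilon> ^ j / (fact j * 2 ^ j)" for j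
      have c_nn: "c j \<ge> 0" for j unfolding c_def using eps0 by simp
      have fabs: "\<bar>f j\<bar> = \<bar>a (s + 2 * j)\<bar> * c j" for j
      proof -
        have "\<bar>(r\<^sup>2 - 1) ^ j\<bar> = \<epsilon> ^ j" using assms(4) by (simp add: power_abs abs_minus_commute)
        then show ?thesis unfolding f_def c_def by (simp add: abs_mult)
      qed
      have c2: "(c j)\<^sup>2 = fact (s + 2 * j) / fact s * x ^ j / (fact j ^ 2 * 4 ^ j)" for j
      proof -
        have "(c j)\<^sup>2 = (sqrt (fact (s + 2 * j) / fact s))\<^sup>2 * (\<epsilon> ^ j)\<^sup>2 / ((fact j)\<^sup>2 * (2 ^ j)\<^sup>2)"
          unfolding c_def by (simp add: power_mult_distrib power_divide)
        also have "\<dots> = fact (s + 2 * j) / fact s * x ^ j / ((fact j)\<^sup>2 * 4 ^ j)"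
        proof -
          have p1: "(\<epsilon> ^ j)\<^sup>2 = x ^ j" unfolding x_def by (metis power_mult mult.commute)
          have four: "(2::real) ^ 2 = 4" by simp
          have p2: "((2::real) ^ j)\<^sup>2 = 4 ^ j" by (metis power_mult mult.commute four)
          have p3: "(sqrt (fact (s + 2 * j) / fact s))\<^sup>2 = (fact (s + 2 * j) / fact s :: real)" by simp
          show ?thesis by (simp only: p1 p2 p3)
        qed
        finally show ?thesis .
      qed
      define P where "P = 2 ^ (s + 2) * x"
      have Pp: "P > 0" unfolding P_def using xp by simp
      define t where "t = sqrt P / sqrt G2"
      have tp: "t > 0" unfolding t_def using Pp G2p by simp
      define g where "g j = (t * A j + 2 * x * bb s (Suc j) / t) / 2" for j
      have fg: "\<bar>f (Suc j)\<bar> \<le> g j" for j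
      proof -
        have "\<bar>f (Suc j)\<bar> = \<bar>a (s + 2 * Suc j)\<bar> * c (Suc j)" by (rule fabs)
        also have "\<dots> \<le> (t * \<bar>a (s + 2 * Suc j)\<bar>\<^sup>2 + (c (Suc j))\<^sup>2 / t) / 2" by (rule amgm[OF tp])
        also have "\<dots> \<le> (t * A j + 2 * x * bb s (Suc j) / t) / 2"
        proof -
          have cb: "(c (Suc j))\<^sup>2 \<le> 2 * x * bb s (Suc j)"
            unfolding c2 by (rule c_bound[OF x0 x1]) simp
          have cdiv: "(c (Suc j))\<^sup>2 / t \<le> 2 * x * bb s (Suc j) / t"
            using cb tp by (intro divide_right_mono) auto
          have eqA: "t * \<bar>a (s + 2 * Suc j)\<bar>\<^sup>2 = t * A j" unfolding A_def by simp
          have "t * \<bar>a (s + 2 * Suc j)\<bar>\<^sup>2 + (c (Suc j))\<^sup>2 / t \<le> t * A j + 2 * x * bb s (Suc j) / t"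
            unfolding eqA using cdiv by (rule add_left_mono)
          then show ?thesis by (rule divide_right_mono) simp
        qed
        finally show ?thesis unfolding g_def .
      qed
      have gsum: "summable g" unfolding g_def
        by (intro summable_divide summable_add summable_mult Asum summable_bb)
      have gle: "suminf g \<le> (t * G2 + 2 * x * 2 ^ (s + 1) / t) / 2"
      proof -
        have "suminf g = (t * suminf A + 2 * x * (\<Sum>j. bb s (Suc j)) / t) / 2"
        proof -
          have sA: "A sums suminf A" using Asum by (rule summable_sums)
          have sB: "(\<lambda>j. bb s (Suc j)) sums (\<Sum>j. bb s (Suc j))" using summable_bb by (rule summable_sums)
          have "g sums ((t * suminf A + 2 * x * (\<Sum>j. bb s (Suc j)) / t) / 2)"
            unfolding g_def
            by (intro sums_divide sums_add sums_mult sA sB)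
          then show ?thesis by (rule sums_unique[symmetric])
        qed
        also have "\<dots> \<le> (t * G2 + 2 * x * 2 ^ (s + 1) / t) / 2"
          using Ale suminf_bb[of s] tp x0
          by (intro divide_right_mono add_mono mult_left_mono) auto
        finally show ?thesis .
      qed
      have fabs_sum: "summable (\<lambda>j. \<bar>f (Suc j)\<bar>)"
        by (rule summable_comparison_test[OF _ gsum]) (use fg in auto)
      have fs_sum: "summable (\<lambda>j. f (Suc j))" using fabs_sum by (rule summable_rabs_cancel)
      have f_sum: "summable f" using fs_sum by (simp add: summable_Suc_iff)
      have f0: "f 0 = a s" unfolding f_def by simp
      have diff: "hermite_coeff_r \<sigma> r s - hermite_coeff_r \<sigma> 1 s = (\<Sum>j. f (Suc j))"
        unfolding hr h1 using suminf_split_head[OF f_sum] f0 by simp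
      have "\<bar>\<Sum>j. f (Suc j)\<bar> \<le> (\<Sum>j. \<bar>f (Suc j)\<bar>)" by (rule summable_rabs[OF fabs_sum])
      also have "\<dots> \<le> suminf g" by (rule suminf_le[OF fg fabs_sum gsum])
      also have "\<dots> \<le> (t * G2 + 2 * x * 2 ^ (s + 1) / t) / 2" by (rule gle)
      also have "\<dots> = sqrt P * sqrt G2"
      proof -
        have gen1: "\<And>p b :: real. b > 0 \<Longrightarrow> p / b * (b * b) = p * b" by (simp add: field_simps)
        have gen2: "\<And>p b :: real. p > 0 \<Longrightarrow> b > 0 \<Longrightarrow> (p * p) / (p / b) = p * b" by (simp add: field_simps)
        have sG: "sqrt G2 > 0" using G2p by simp
        have sP: "sqrt P > 0" using Pp by simp
        have GG: "G2 = sqrt G2 * sqrt G2" using G2nn by simp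
        have PP: "P = sqrt P * sqrt P" using Pp by simp
        have e1: "t * G2 = sqrt P * sqrt G2"
          unfolding t_def by (subst GG) (rule gen1[OF sG])
        have e2: "2 * x * 2 ^ (s + 1) = P" unfolding P_def by simp
        have e3: "P / t = sqrt P * sqrt G2"
          unfolding t_def by (subst PP) (rule gen2[OF sP sG])
        show ?thesis using e1 e2 e3 by simp
      qed
      also have "\<dots> = gnorm \<sigma> * 2 powr ((real s + 2) / 2) * \<epsilon>"
        unfolding gn P_def x_def sqrt_pow_eq using eps0 by simp
      also have "\<dots> \<le> gnorm \<sigma> * 2 powr ((real s + 2) / 2) * (\<epsilon> / sqrt (1 - 2 * \<epsilon>\<^sup>2))"
      proof (rule mult_left_mono)
        show "\<epsilon> \<le> \<epsilon> / sqrt (1 - 2 * \<epsilon>\<^sup>2)"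
          using sq_pos sq_le eps0 by (simp add: le_divide_eq mult_left_le)
        show "0 \<le> gnorm \<sigma> * 2 powr ((real s + 2) / 2)" using gn G2nn by simp
      qed
      finally show ?thesis unfolding diff .
    qed
  qed
qed


end
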